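(* Let $S$ be an infinite set and $\mathcal{F}\subseteq 2^S$ countable, nontrivial, and closed under finite unions and finite intersections. Let $(C,\mathbf{A})$ be a conditional classification problem with $C$ and $S\setminus C$ infinite and $\mathbf{A}=(A_1,\dots,A_k)$ such that $A_i\notin\mathit{cclass}_1(C,\mathcal{F})$ for $1\le i\le k$. Then there exists $\mathbf{B}\le\mathbf{A}$ with $|\mathbf{B}|=k$ and $\mathbf{B}\in\mathit{ccore}_k(C,\mathcal{F})$.
   Context: $\mathcal{F}$ is nontrivial if $\emptyset,S\in\mathcal{F}$ and for all $Q\in\mathcal{F}$ and finite $E\subseteq S$ both $Q\cup E\in\mathcal{F}$ and $Q\setminus E\in\mathcal{F}$. A classification problem is a vector $(A_1,\dots,A_k)$, $k\ge1$, of pairwise disjoint infinite subsets of $S$, of length $k$. A conditional classification problem is a pair $(C,\mathbf{A})$ with $C\subseteq S$, $\mathbf{A}$ a classification problem and $C$ disjoint from all components of $\mathbf{A}$. For vectors $\mathbf{B}=(B_1,\dots,B_m)$, $\mathbf{Q}=(Q_1,\dots,Q_k)$, $\mathbf{B}\le\mathbf{Q}$ means $1\le m\le k$ and there is an injective $\sigma:\{1,\dots,m\}\to\{1,\dots,k\}$ with $B_i\subseteq Q_{\sigma(i)}$. An $\mathcal{F}$-partition is a vector of pairwise disjoint members of $\mathcal{F}$ whose union is $S$. $\mathit{cclass}_k(C,\mathcal{F})$ is the set of classification problems $\mathbf{A}$ of length $k$ such that $(C,\mathbf{A})$ is a conditional classification problem and there is an $\mathcal{F}$-partition $(Q_0,Q_1,\dots,Q_k)$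 with $C\subseteq Q_0$ and $\mathbf{A}\le(Q_1,\dots,Q_k)$ (a single set $A$ is identified with $(A)$). $\mathit{ccore}_k(C,\mathcal{F})$ is the set of classification problems $\mathbf{A}$ of length $k$ with $(C,\mathbf{A})$ a conditional classification problem such that every classification problem $\mathbf{A}'\le\mathbf{A}$ (any length $\ge1$) satisfies $\mathbf{A}'\notin\mathit{cclass}_{|\mathbf{A}'|}(C,\mathcal{F})$. *)

theory Defs
  imports Main "HOL-Library.Countable_Set"
begin

text \<open>Vectors of sets are represented as lists; index i (0-based) stands for component i+1.\<close>

definition nontrivial_fam :: "'a set \<Rightarrow> 'a set set \<Rightarrow> bool" where
  "nontrivial_fam S F \<longleftrightarrow> {} \<in> F \<and> S \<in> F \<and>
     (\<forall>Q\<in>F. \<forall>E. finite E \<and> E \<subseteq> S \<longrightarrow> Q \<union> E \<in> F \<and> Q - E \<in> F)"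

definition pairwise_disj_vec :: "'a set list \<Rightarrow> bool" where
  "pairwise_disj_vec A \<longleftrightarrow> (\<forall>i<length A. \<forall>j<length A. i \<noteq> j \<longrightarrow> A!i \<inter> A!j = {})"

definition class_problem :: "'a set \<Rightarrow> 'a set list \<Rightarrow> bool" where
  "class_problem S A \<longleftrightarrow> length A \<ge> 1 \<and> pairwise_disj_vec A \<and>
     (\<forall>i<length A. A!i \<subseteq> S \<and> infinite (A!i))"

definition cond_class_problem :: "'a set \<Rightarrow> 'a set \<Rightarrow> 'a set list \<Rightarrow> bool" where
  "cond_class_problem S C A \<longleftrightarrow> C \<subseteq> S \<and> class_problem S A \<and>
     (\<forall>i<length A. C \<inter> A!i = {})"

definition vec_le :: "'a set list \<Rightarrow> 'a set list \<Rightarrow> bool" where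
  "vec_le B Q \<longleftrightarrow> 1 \<le> length B \<and> length B \<le> length Q \<and>
     (\<exists>\<sigma>. inj_on \<sigma> {..<length B} \<and> \<sigma> ` {..<length B} \<subseteq> {..<length Q} \<and>
          (\<forall>i<length B. B!i \<subseteq> Q!(\<sigma> i)))"

definition F_partition :: "'a set \<Rightarrow> 'a set set \<Rightarrow> 'a set list \<Rightarrow> bool" where
  "F_partition S F Q \<longleftrightarrow> pairwise_disj_vec Q \<and> set Q \<subseteq> F \<and> \<Union>(set Q) = S"

text \<open>A partition (Q0,Q1,...,Qk) is the list Q with Q!0 = Q0 and tl Q = (Q1,...,Qk).\<close>
definition cclass :: "'a set \<Rightarrow> nat \<Rightarrow> 'a set \<Rightarrow> 'a set set \<Rightarrow> 'a set list set" where
  "cclass S k C F = {A. length A = k \<and> cond_class_problem S C A \<and>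
     (\<exists>Q. length Q = k + 1 \<and> F_partition S F Q \<and> C \<subseteq> Q!0 \<and> vec_le A (tl Q))}"

definition ccore :: "'a set \<Rightarrow> nat \<Rightarrow> 'a set \<Rightarrow> 'a set set \<Rightarrow> 'a set list set" where
  "ccore S k C F = {A. length A = k \<and> cond_class_problem S C A \<and>
     (\<forall>A'. class_problem S A' \<and> vec_le A' A \<longrightarrow> A' \<notin> cclass S (length A') C F)}"

end

theory Submission
  imports Defs
begin

primrec Rseq :: "(nat \<Rightarrow> 'a set) \<Rightarrow> nat \<Rightarrow> 'a set" where
  "Rseq f 0 = f 0" | "Rseq f (Suc n) = Rseq f n \<inter> f (Suc n)"

primrec Tseq :: "'a set \<Rightarrow> (nat \<Rightarrow> 'a set) \<Rightarrow> nat \<Rightarrow> 'a set" where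
  "Tseq X R 0 = {}"
| "Tseq X R (Suc n) = insert (SOME y. y \<in> X \<inter> R n - Tseq X R n) (Tseq X R n)"

lemma key:
  assumes "countable K" "K \<noteq> {}" "\<forall>P\<in>K. \<forall>Q\<in>K. P \<inter> Q \<in> K" "\<forall>Q\<in>K. infinite (X \<inter> Q)"
  shows "\<exists>B \<subseteq> X. infinite B \<and> (\<forall>Q\<in>K. finite (B - Q))"
proof -
  define f where "f = from_nat_into K"
  have fK: "f n \<in> K" for n using from_nat_into[OF assms(2)] f_def by auto
  have surj: "\<exists>n. f n = Q" if "Q \<in> K" for Q using from_nat_into_surj[OF assms(1) that] f_def by auto
  define R where "R = Rseq f"
  have RK: "R n \<in> K" for n by (induct n) (auto simp: R_def fK assms(3))
  have Rf: "R n \<subseteq> f n" for n by (cases n) (auto simp: R_def)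
  have Ranti: "\<forall>m\<le>n. R n \<subseteq> R m" for n
    by (induct n) (auto simp: R_def le_Suc_eq)
  define T where "T = Tseq X R"
  have Tfin: "finite (T n)" for n by (induct n) (auto simp: T_def)
  have ch: "(SOME y. y \<in> X \<inter> R n - T n) \<in> X \<inter> R n - T n" for n
  proof -
    have "infinite (X \<inter> R n - T n)" using assms(4) RK Tfin by auto
    then have "\<exists>y. y \<in> X \<inter> R n - T n" by (metis ex_in_conv finite.emptyI)
    then show ?thesis by (rule someI_ex)
  qed
  have TS: "T (Suc n) = insert (SOME y. y \<in> X \<inter> R n - T n) (T n)" for n by (simp add: T_def)
  have card: "card (T n) = n" for n
    by (induct n) (use ch Tfin TS in \<open>auto simp: T_def\<close>)
  have TX: "T n \<subseteq> X" for n by (induct n) (use ch TS in \<open>auto simp: T_def\<close>)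
  have Tmono: "\<forall>m\<le>n. T m \<subseteq> T n" for n
    by (induct n) (auto simp: TS le_Suc_eq)
  have TR: "T m \<subseteq> T n \<union> R n" for m n
  proof (induct m)
    case 0 then show ?case by (simp add: T_def)
  next
    case (Suc m)
    show ?case
    proof (cases "m < n")
      case True then show ?thesis using Tmono[of n] by (meson Suc_leI le_supI1)
    next
      case False
      then have "R m \<subseteq> R n" using Ranti by auto
      then show ?thesis using Suc ch[of m] TS[of m] by auto
    qed
  qed
  define B where "B = (\<Union>n. T n)"
  have "B \<subseteq> X" using TX B_def by auto
  moreover have "infinite B"
  proof
    assume fb: "finite B"
    have "T (Suc (card B)) \<subseteq> B" using B_def by auto
    then have "card (T (Suc (card B))) \<le> card B" using fb card_mono by blast
    then show False using card by simp
  qed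
  moreover have "finite (B - Q)" if "Q \<in> K" for Q
  proof -
    obtain n where n: "f n = Q" using surj[OF \<open>Q \<in> K\<close>] by blast
    have "B - Q \<subseteq> T n" using TR[of _ n] Rf[of n] n B_def by auto
    then show ?thesis using Tfin finite_subset by blast
  qed
  ultimately show ?thesis by blast
qed
lemma Union_list_F:
  assumes "\<forall>Q1\<in>F. \<forall>Q2\<in>F. Q1 \<union> Q2 \<in> F" "{} \<in> F" "set xs \<subseteq> F"
  shows "\<Union>(set xs) \<in> F"
  using assms(3) by (induct xs) (use assms(1,2) in auto)

theorem lemma4p6:
  fixes S C :: "'a set" and F :: "'a set set" and A :: "'a set list" and k :: nat
  assumes "infinite S"
    and "F \<subseteq> Pow S" and "countable F" and "nontrivial_fam S F"
    and "\<forall>Q1\<in>F. \<forall>Q2\<in>F. Q1 \<union> Q2 \<in> F \<and> Q1 \<inter> Q2 \<in> F"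
    and "cond_class_problem S C A" and "length A = k"
    and "infinite C" and "infinite (S - C)"
    and "\<forall>i<k. [A!i] \<notin> cclass S 1 C F"
  shows "\<exists>B. vec_le B A \<and> length B = k \<and> B \<in> ccore S k C F"
proof -
  note nt = assms(4)[unfolded nontrivial_fam_def]
  have CS: "C \<subseteq> S" and cpA: "class_problem S A" and CA: "\<forall>i<k. C \<inter> A!i = {}"
    using assms(6,7) unfolding cond_class_problem_def by auto
  have k1: "k \<ge> 1" and dA: "pairwise_disj_vec A" and AS: "\<forall>i<k. A!i \<subseteq> S \<and> infinite (A!i)"
    using cpA assms(7) unfolding class_problem_def by auto
  define K where "K = {Q \<in> F. S - Q \<in> F \<and> C \<subseteq> Q}"
  have cK: "countable K" using assms(3) K_def by auto
  have SK: "S \<in> K" using nt CS K_def by auto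
  have intK: "\<forall>P\<in>K. \<forall>Q\<in>K. P \<inter> Q \<in> K"
  proof (intro ballI)
    fix P Q assume "P \<in> K" "Q \<in> K"
    then show "P \<inter> Q \<in> K" using assms(5) unfolding K_def
      by (auto simp: Diff_Int)
  qed
  have infK: "infinite (A!i \<inter> Q)" if i: "i < k" and Q: "Q \<in> K" for i Q
  proof
    assume fin: "finite (A!i \<inter> Q)"
    define E where "E = A!i \<inter> Q"
    define Q' where "Q' = Q - E"
    have QF: "Q \<in> F" "S - Q \<in> F" "C \<subseteq> Q" using Q K_def by auto
    have ES: "E \<subseteq> S" using AS i E_def by auto
    have Q'F: "Q' \<in> F" using nt QF fin ES unfolding Q'_def E_def by auto
    have "(S - Q) \<union> E \<in> F" using nt QF fin ES unfolding E_def by auto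
    moreover have "S - Q' = (S - Q) \<union> E" using ES unfolding Q'_def by auto
    ultimately have cQ'F: "S - Q' \<in> F" by simp
    have CQ': "C \<subseteq> Q'" using QF CA i unfolding Q'_def E_def by auto
    have Q'S: "Q' \<subseteq> S" using Q'F assms(2) by auto
    have "[A!i] \<in> cclass S 1 C F"
      unfolding cclass_def
    proof (intro CollectI conjI exI)
      show "length [A!i] = 1" by simp
      show "cond_class_problem S C [A!i]"
        using CS AS i CA unfolding cond_class_problem_def class_problem_def pairwise_disj_vec_def
        by auto
      show "length [Q', S - Q'] = 1 + 1" by simp
      show "F_partition S F [Q', S - Q']"
        unfolding F_partition_def pairwise_disj_vec_def
        using Q'F cQ'F Q'S by (auto simp: less_Suc_eq)
      show "C \<subseteq> [Q', S - Q'] ! 0" using CQ' by simp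
      show "vec_le [A!i] (tl [Q', S - Q'])"
        unfolding vec_le_def
        apply (rule conjI, simp, rule conjI, simp)
        apply (rule exI[of _ id])
        using AS i unfolding Q'_def E_def by auto
    qed
    then show False using assms(10) i by blast
  qed
  have "\<forall>i<k. \<exists>Bi. Bi \<subseteq> A!i \<and> infinite Bi \<and> (\<forall>Q\<in>K. finite (Bi - Q))"
  proof (intro allI impI)
    fix i assume ik: "i < k"
    have KN: "K \<noteq> {}" using SK by auto
    have "\<forall>Q\<in>K. infinite (A!i \<inter> Q)" using infK[OF ik] by blast
    from key[OF cK KN intK this] show "\<exists>Bi. Bi \<subseteq> A!i \<and> infinite Bi \<and> (\<forall>Q\<in>K. finite (Bi - Q))"
      by blast
  qed
  then obtain Bf where Bf: "\<forall>i<k. Bf i \<subseteq> A!i \<and> infinite (Bf i) \<and> (\<forall>Q\<in>K. finite (Bf i - Q))"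
    by metis
  define B where "B = map Bf [0..<k]"
  have lB: "length B = k" using B_def by simp
  have Bi: "B!i = Bf i" if "i < k" for i using that B_def by simp
  have vle: "vec_le B A"
    unfolding vec_le_def using lB assms(7) k1 Bf Bi
    by (intro conjI exI[of _ id]) auto
  have ccB: "cond_class_problem S C B"
    unfolding cond_class_problem_def class_problem_def pairwise_disj_vec_def
  proof (intro conjI allI impI)
    show "C \<subseteq> S" by (rule CS)
    show "1 \<le> length B" using lB k1 by simp
    fix i assume i: "i < length B"
    then have ik: "i < k" using lB by simp
    show "B!i \<subseteq> S" using Bi[OF ik] Bf[rule_format, OF ik] AS[rule_format, OF ik] by blast
    show "infinite (B!i)" using Bi[OF ik] Bf[rule_format, OF ik] by simp
    show "C \<inter> B!i = {}" using Bi[OF ik] Bf[rule_format, OF ik] CA ik by blast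
    fix j assume j: "j < length B" "i \<noteq> j"
    then have jk: "j < k" using lB by simp
    have "A!i \<inter> A!j = {}" using dA[unfolded pairwise_disj_vec_def] ik jk j(2) assms(7) by auto
    then show "B!i \<inter> B!j = {}" using Bi[OF ik] Bi[OF jk] Bf[rule_format, OF ik] Bf[rule_format, OF jk] by blast
  qed
  have "B \<in> ccore S k C F"
    unfolding ccore_def
  proof (intro CollectI conjI allI impI)
    show "length B = k" by (rule lB)
    show "cond_class_problem S C B" by (rule ccB)
    fix A' assume a: "class_problem S A' \<and> vec_le A' B"
    show "A' \<notin> cclass S (length A') C F"
    proof
      assume "A' \<in> cclass S (length A') C F"
      then obtain Q where lQ: "length Q = length A' + 1" and Qp: "F_partition S F Q"
        and CQ: "C \<subseteq> Q!0" and vQ: "vec_le A' (tl Q)" unfolding cclass_def by auto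
      obtain \<sigma> where s: "\<sigma> ` {..<length A'} \<subseteq> {..<length B}" "\<forall>i<length A'. A'!i \<subseteq> B!(\<sigma> i)"
        using a unfolding vec_le_def by auto
      obtain \<tau> where t: "\<tau> ` {..<length A'} \<subseteq> {..<length (tl Q)}" "\<forall>i<length A'. A'!i \<subseteq> tl Q!(\<tau> i)"
        using vQ unfolding vec_le_def by auto
      have l1: "length A' \<ge> 1" using a unfolding class_problem_def by auto
      have inf0: "infinite (A'!0)" using a l1 unfolding class_problem_def by (auto simp: Suc_le_eq)
      obtain Q0 Qs where QQ: "Q = Q0 # Qs" using lQ by (cases Q) auto
      have dQ: "pairwise_disj_vec Q" and sQ: "set Q \<subseteq> F" and uQ: "\<Union>(set Q) = S"
        using Qp unfolding F_partition_def by auto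
      have disj: "Q0 \<inter> X = {}" if "X \<in> set Qs" for X
      proof -
        obtain j where j: "j < length Qs" "Qs!j = X" using \<open>X \<in> set Qs\<close> by (metis in_set_conv_nth)
        show ?thesis using dQ[unfolded pairwise_disj_vec_def, rule_format, of 0 "Suc j"] j QQ by simp
      qed
      have eq: "S - Q0 = \<Union>(set Qs)" using uQ QQ disj by auto
      have "\<Union>(set Qs) \<in> F" using Union_list_F[of F Qs] assms(5) nt sQ QQ by auto
      then have Q0K: "Q0 \<in> K" using eq sQ QQ CQ unfolding K_def by auto
      have s0: "\<sigma> 0 < k" using s(1) l1 lB by (auto simp: Suc_le_eq)
      have A'0: "A'!0 \<subseteq> Bf (\<sigma> 0)" using s(2) l1 Bi s0 by (auto simp: Suc_le_eq)
      have t0: "\<tau> 0 < length Qs" using t(1) l1 QQ by (auto simp: Suc_le_eq)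
      have "A'!0 \<subseteq> Qs!(\<tau> 0)" using t(2) l1 QQ by (auto simp: Suc_le_eq)
      moreover have "Qs!(\<tau> 0) \<in> set Qs" using t0 by simp
      ultimately have "A'!0 \<inter> Q0 = {}" using disj by blast
      then have "A'!0 \<subseteq> Bf (\<sigma> 0) - Q0" using A'0 by auto
      moreover have "finite (Bf (\<sigma> 0) - Q0)" using Bf[rule_format, OF s0] Q0K by blast
      ultimately show False using inf0 finite_subset by blast
    qed
  qed
  then show ?thesis using vle lB by blast
qed

end
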